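(* Let $P$ be a distribution on $\mathcal{X}$, $R>0$, $K>0$, and let $\overline{P}_e^{(n)}$ be the random-coding average error probability (codebook letters i.i.d. $P$) of the maximum-likelihood decoder, averaged over messages, codebooks and channel instances. Then \[ \limsup_{n\to\infty} -\tfrac1n\log\big[1-\overline{P}_e^{(n)}\big]\le E_c(P,R,K),\qquad E_c(P,R,K)=\min_{TV}\Big\{D(TV\|PW)+\big|R-A_{TV}-|B_{TV}-K|^{+}\big|^{+}\Big\}. \]
   Context: Channel model: $\mathcal{X},\mathcal{Y}$ finite alphabets, $W(y|x)$ a fixed conditional distribution. A codebook of block length $n$ has $\lfloor e^{nR}\rfloor$ codewords $\mathbf{x}_m\in\mathcal{X}^n$. A channel instance: independently for each message $m$, a cloud of $\lfloor e^{nK}\rfloor$ independent sequences $\mathbf{y}\in\mathcal{Y}^n$ whose letters are independent with $y_i\sim W(\cdot|x_{m,i})$. Messages are equiprobable; when $m$ is sent, the output is a uniformly chosen vector of the cloud of $m$. The decoder knows codebook and clouds; the ML decoder outputs a message whose cloud contains the most copies of the received vector (ties broken at random). Logs are natural. $TV$ is a joint distribution on $\mathcal{Y}\times\mathcal{X}$ with $\mathcal{Y}$-marginal $T$ and conditional $V(x|y)$; $PW$ is $P(x)W(y|x)$; $D(TV\|PW)=\sum T(y)V(x|y)\log\frac{T(y)V(x|y)}{P(x)W(y|x)}$; $A_{TV}=\sum T(y)V(x|y)\log\frac{V(x|y)}{P(x)}$; $B_{TV}=\mathbb{E}_{TV}[-\log W(Y|X)]$; $|t|^{+}=\max\{0,t\}$.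 *)

theory Defs
  imports "HOL-Analysis.Analysis"
begin

definition seqs :: "nat \<Rightarrow> 'a list set" where
  "seqs n = {xs. length xs = n}"

definition pos :: "real \<Rightarrow> real" where
  "pos t = max 0 t"

definition nmsg :: "real \<Rightarrow> nat \<Rightarrow> nat" where
  "nmsg R n = nat \<lfloor>exp (real n * R)\<rfloor>"

definition ncloud :: "real \<Rightarrow> nat \<Rightarrow> nat" where
  "ncloud K n = nat \<lfloor>exp (real n * K)\<rfloor>"

text \<open>Probability that the ML decoder (ties broken uniformly at random) outputs the
  correct message m, given the channel instance y (y (m',l') is the l'-th vector of
  the cloud of message m'), when m is sent and the l-th vector of its cloud is output.\<close>
definition ml_correct :: "nat \<Rightarrow> nat \<Rightarrow> (nat \<times> nat \<Rightarrow> 'y list) \<Rightarrow> nat \<Rightarrow> nat \<Rightarrow> real" where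
  "ml_correct M L y m l =
    (let v = y (m, l);
         cnt = (\<lambda>m'. card {l'. l' < L \<and> y (m', l') = v});
         mx = Max (cnt ` {..<M})
     in if cnt m = mx then 1 / real (card {m'. m' < M \<and> cnt m' = mx}) else 0)"

definition succ_prob :: "('x::finite \<Rightarrow> real) \<Rightarrow> ('x \<Rightarrow> 'y::finite \<Rightarrow> real)
    \<Rightarrow> real \<Rightarrow> real \<Rightarrow> nat \<Rightarrow> real" where
  "succ_prob P W R K n =
    (let M = nmsg R n; L = ncloud K n in
     \<Sum>c \<in> PiE {..<M} (\<lambda>_. (seqs n :: 'x list set)).
       (\<Prod>m<M. \<Prod>i<n. P (c m ! i)) *
       (\<Sum>y \<in> PiE ({..<M} \<times> {..<L}) (\<lambda>_. (seqs n :: 'y list set)).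
          (\<Prod>m<M. \<Prod>l<L. \<Prod>i<n. W (c m ! i) (y (m, l) ! i)) *
          (\<Sum>m<M. \<Sum>l<L. (1 / real M) * (1 / real L) * ml_correct M L y m l)))"

definition err_prob :: "('x::finite \<Rightarrow> real) \<Rightarrow> ('x \<Rightarrow> 'y::finite \<Rightarrow> real)
    \<Rightarrow> real \<Rightarrow> real \<Rightarrow> nat \<Rightarrow> real" where
  "err_prob P W R K n = 1 - succ_prob P W R K n"

text \<open>Joint distributions TV on Y x X, written Q y x = T(y) V(x|y).
  T(y) = sum_x Q y x, V(x|y) = Q y x / T y.  Terms with Q y x = 0 contribute 0.\<close>
definition divKL :: "('x::finite \<Rightarrow> real) \<Rightarrow> ('x \<Rightarrow> 'y::finite \<Rightarrow> real) \<Rightarrow> ('y \<Rightarrow> 'x \<Rightarrow> real) \<Rightarrow> real" where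
  "divKL P W Q = (\<Sum>y\<in>UNIV. \<Sum>x\<in>UNIV. if Q y x > 0 then Q y x * ln (Q y x / (P x * W x y)) else 0)"

definition A_TV :: "('x::finite \<Rightarrow> real) \<Rightarrow> ('y::finite \<Rightarrow> 'x \<Rightarrow> real) \<Rightarrow> real" where
  "A_TV P Q = (\<Sum>y\<in>UNIV. \<Sum>x\<in>UNIV. if Q y x > 0
      then Q y x * ln ((Q y x / (\<Sum>x'\<in>UNIV. Q y x')) / P x) else 0)"

definition B_TV :: "('x::finite \<Rightarrow> 'y::finite \<Rightarrow> real) \<Rightarrow> ('y \<Rightarrow> 'x \<Rightarrow> real) \<Rightarrow> real" where
  "B_TV W Q = (\<Sum>y\<in>UNIV. \<Sum>x\<in>UNIV. if Q y x > 0 then Q y x * (- ln (W x y)) else 0)"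

text \<open>Joint distributions absolutely continuous w.r.t. PW (outside this set the
  divergence is +infinity, so they never attain the minimum).\<close>
definition joint_dists :: "('x::finite \<Rightarrow> real) \<Rightarrow> ('x \<Rightarrow> 'y::finite \<Rightarrow> real) \<Rightarrow> ('y \<Rightarrow> 'x \<Rightarrow> real) set" where
  "joint_dists P W = {Q. (\<forall>y x. Q y x \<ge> 0) \<and> (\<Sum>y\<in>UNIV. \<Sum>x\<in>UNIV. Q y x) = 1 \<and>
                          (\<forall>y x. Q y x > 0 \<longrightarrow> P x * W x y > 0)}"

definition Ec :: "('x::finite \<Rightarrow> real) \<Rightarrow> ('x \<Rightarrow> 'y::finite \<Rightarrow> real) \<Rightarrow> real \<Rightarrow> real \<Rightarrow> real" where
  "Ec P W R K = Inf ((\<lambda>Q. divKL P W Q + pos (R - A_TV P Q - pos (B_TV W Q - K))) ` joint_dists P W)"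

end

theory Submission
  imports Defs
begin

lemma seqs_Suc: "seqs (Suc n) = (\<lambda>(xs,a). xs@[a]) ` (seqs n \<times> UNIV)"
proof -
  have "xs \<in> (\<lambda>(xs,a). xs@[a]) ` (seqs n \<times> UNIV)" if "length xs = Suc n" for xs :: "'a list"
  proof -
    have "xs = butlast xs @ [last xs]" using that
      by (metis append_butlast_last_id list.size(3) nat.distinct(1))
    moreover have "length (butlast xs) = n" using that by simp
    ultimately show ?thesis unfolding seqs_def by (auto intro!: image_eqI[of _ _ "(butlast xs, last xs)"])
  qed
  then show ?thesis unfolding seqs_def by auto
qed

lemma inj_snoc: "inj_on (\<lambda>(xs,a). xs@[a]) (A \<times> B)"
  by (auto simp: inj_on_def)

lemma finite_seqs: "finite (seqs n :: 'a::finite list set)"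
  by (induction n) (auto simp: seqs_Suc, simp add: seqs_def)

lemma seqs_0: "seqs 0 = {[]}"
  by (auto simp: seqs_def)

lemma sum_seqs_Suc:
  "(\<Sum>xs\<in>seqs (Suc n). f xs) = (\<Sum>xs\<in>seqs n. \<Sum>a\<in>(UNIV::'a::finite set). f (xs@[a]))"
  unfolding seqs_Suc
  by (subst sum.reindex[OF inj_snoc]) (simp add: sum.cartesian_product split_def)

lemma prod_snoc0: "xs \<in> seqs n \<Longrightarrow> (\<Prod>i<n. F i ((xs@[a])!i)) = (\<Prod>i<n. F i (xs!i))"
  by (intro prod.cong) (auto simp: seqs_def nth_append)
lemma sum_snoc0: "xs \<in> seqs n \<Longrightarrow> (\<Sum>i<n. F i ((xs@[a])!i)) = (\<Sum>i<n. F i (xs!i))"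
  by (intro sum.cong) (auto simp: seqs_def nth_append)
lemma nth_snoc_n: "xs \<in> seqs n \<Longrightarrow> (xs@[a])!n = a"
  unfolding seqs_def by (metis mem_Collect_eq nth_append_length)

lemma prod_snoc: "xs \<in> seqs n \<Longrightarrow> (\<Prod>i<Suc n. F i ((xs@[a])!i)) = (\<Prod>i<n. F i (xs!i)) * F n a"
  by (simp add: prod_snoc0 nth_snoc_n)

lemma sum_snoc: "xs \<in> seqs n \<Longrightarrow> (\<Sum>i<Suc n. F i ((xs@[a])!i)) = (\<Sum>i<n. F i (xs!i)) + F n a"
  by (simp add: sum_snoc0 nth_snoc_n)

lemma sum_prod_seqs:
  fixes F :: "nat \<Rightarrow> 'a::finite \<Rightarrow> real"
  shows "(\<Sum>x\<in>seqs n. \<Prod>i<n. F i (x!i)) = (\<Prod>i<n. \<Sum>a\<in>UNIV. F i a)"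
proof (induction n)
  case 0 then show ?case by (simp add: seqs_0)
next
  case (Suc n)
  have "(\<Sum>x\<in>seqs (Suc n). \<Prod>i<Suc n. F i (x!i)) = (\<Sum>xs\<in>seqs n. \<Sum>a\<in>UNIV. (\<Prod>i<n. F i (xs!i)) * F n a)"
    unfolding sum_seqs_Suc by (intro sum.cong refl) (simp add: prod_snoc0 nth_snoc_n)
  also have "\<dots> = (\<Sum>xs\<in>seqs n. \<Prod>i<n. F i (xs!i)) * (\<Sum>a\<in>UNIV. F n a)"
    unfolding sum_product ..
  finally show ?case using Suc by simp
qed

lemma moments:
  fixes q h :: "'a::finite \<Rightarrow> real"
  assumes q1: "(\<Sum>z\<in>UNIV. q z) = 1" and qh: "(\<Sum>z\<in>UNIV. q z * h z) = 0"
  shows "(\<Sum>zs\<in>seqs n. \<Prod>i<n. q (zs!i)) = 1"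
    and "(\<Sum>zs\<in>seqs n. (\<Prod>i<n. q (zs!i)) * (\<Sum>i<n. h (zs!i))) = 0"
    and "(\<Sum>zs\<in>seqs n. (\<Prod>i<n. q (zs!i)) * (\<Sum>i<n. h (zs!i))^2) = real n * (\<Sum>z\<in>UNIV. q z * (h z)^2)"
proof -
  show 0: "(\<Sum>zs\<in>seqs n. \<Prod>i<n. q (zs!i)) = 1" for n
    using sum_prod_seqs[of "\<lambda>i. q" n] q1 by simp
  show 1: "(\<Sum>zs\<in>seqs n. (\<Prod>i<n. q (zs!i)) * (\<Sum>i<n. h (zs!i))) = 0" for n
  proof (induction n)
    case 0 then show ?case by (simp add: seqs_0)
  next
    case (Suc n)
    have "(\<Sum>zs\<in>seqs (Suc n). (\<Prod>i<Suc n. q (zs!i)) * (\<Sum>i<Suc n. h (zs!i)))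
       = (\<Sum>xs\<in>seqs n. \<Sum>a\<in>UNIV. ((\<Prod>i<n. q (xs!i)) * (\<Sum>i<n. h (xs!i))) * q a + (\<Prod>i<n. q (xs!i)) * (q a * h a))"
      unfolding sum_seqs_Suc by (intro sum.cong refl) (simp add: prod_snoc0[where F="\<lambda>i. q"] sum_snoc0[where F="\<lambda>i. h"] nth_snoc_n algebra_simps)
    also have "\<dots> = (\<Sum>xs\<in>seqs n. (\<Prod>i<n. q (xs!i)) * (\<Sum>i<n. h (xs!i))) * (\<Sum>a\<in>UNIV. q a)
        + (\<Sum>xs\<in>seqs n. (\<Prod>i<n. q (xs!i))) * (\<Sum>a\<in>UNIV. q a * h a)"
      unfolding sum.distrib sum_product ..
    finally show ?case using Suc qh by simp
  qed
  show "(\<Sum>zs\<in>seqs n. (\<Prod>i<n. q (zs!i)) * (\<Sum>i<n. h (zs!i))^2) = real n * (\<Sum>z\<in>UNIV. q z * (h z)^2)"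
  proof (induction n)
    case 0 then show ?case by (simp add: seqs_0)
  next
    case (Suc n)
    have "(\<Sum>zs\<in>seqs (Suc n). (\<Prod>i<Suc n. q (zs!i)) * (\<Sum>i<Suc n. h (zs!i))^2)
       = (\<Sum>xs\<in>seqs n. \<Sum>a\<in>UNIV. ((\<Prod>i<n. q (xs!i)) * (\<Sum>i<n. h (xs!i))^2) * q a
            + 2 * ((\<Prod>i<n. q (xs!i)) * (\<Sum>i<n. h (xs!i))) * (q a * h a)
            + (\<Prod>i<n. q (xs!i)) * (q a * (h a)^2))"
      unfolding sum_seqs_Suc by (intro sum.cong refl) (simp add: prod_snoc0[where F="\<lambda>i. q"] sum_snoc0[where F="\<lambda>i. h"] nth_snoc_n power2_eq_square algebra_simps)
    also have "\<dots> = (\<Sum>xs\<in>seqs n. (\<Prod>i<n. q (xs!i)) * (\<Sum>i<n. h (xs!i))^2) * (\<Sum>a\<in>UNIV. q a)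
        + (\<Sum>xs\<in>seqs n. 2 * ((\<Prod>i<n. q (xs!i)) * (\<Sum>i<n. h (xs!i)))) * (\<Sum>a\<in>UNIV. q a * h a)
        + (\<Sum>xs\<in>seqs n. (\<Prod>i<n. q (xs!i))) * (\<Sum>a\<in>UNIV. q a * (h a)^2)"
      unfolding sum.distrib sum_product ..
    finally show ?case using Suc qh q1 0[of n] by (simp add: algebra_simps)
  qed
qed

lemma sum_seqs_pairs:
  fixes F :: "'a list \<Rightarrow> 'b list \<Rightarrow> real"
  shows "(\<Sum>v\<in>seqs n. \<Sum>x\<in>seqs n. F v x) = (\<Sum>zs\<in>seqs n. F (map fst zs) (map snd zs))"
proof -
  have b: "bij_betw (\<lambda>zs. (map fst zs, map snd zs)) (seqs n) (seqs n \<times> seqs n)"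
  proof (rule bij_betw_byWitness[where f'="\<lambda>(v,x). zip v x"])
    show "\<forall>a\<in>seqs n. (case (map fst a, map snd a) of (v, x) \<Rightarrow> zip v x) = a" by (simp add: zip_map_fst_snd)
    show "\<forall>a'\<in>seqs n \<times> seqs n. (\<lambda>zs. (map fst zs, map snd zs)) (case a' of (v, x) \<Rightarrow> zip v x) = a'"
      by (auto simp: seqs_def)
    show "(\<lambda>zs. (map fst zs, map snd zs)) ` seqs n \<subseteq> seqs n \<times> seqs n" by (auto simp: seqs_def)
    show "(\<lambda>(v, x). zip v x) ` (seqs n \<times> seqs n) \<subseteq> seqs n" by (auto simp: seqs_def)
  qed
  show ?thesis
    by (simp add: sum.cartesian_product sum.reindex_bij_betw[OF b, of "\<lambda>(v,x). F v x", symmetric])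
qed

definition Exq :: "('x::finite \<Rightarrow> real) \<Rightarrow> ('x \<Rightarrow> 'y::finite \<Rightarrow> real) \<Rightarrow> nat \<Rightarrow> nat \<Rightarrow> nat
   \<Rightarrow> ((nat \<Rightarrow> 'x list) \<Rightarrow> (nat \<times> nat \<Rightarrow> 'y list) \<Rightarrow> real) \<Rightarrow> real" where
  "Exq P W n M L F =
     (\<Sum>c \<in> PiE {..<M} (\<lambda>_. (seqs n :: 'x list set)).
       (\<Prod>m<M. \<Prod>i<n. P (c m ! i)) *
       (\<Sum>y \<in> PiE ({..<M} \<times> {..<L}) (\<lambda>_. (seqs n :: 'y list set)).
          (\<Prod>m<M. \<Prod>l<L. \<Prod>i<n. W (c m ! i) (y (m, l) ! i)) * F c y))"

definition Pn :: "('x \<Rightarrow> real) \<Rightarrow> nat \<Rightarrow> 'x list \<Rightarrow> real" where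
  "Pn P n x = (\<Prod>i<n. P (x!i))"
definition Wn :: "('x \<Rightarrow> 'y \<Rightarrow> real) \<Rightarrow> nat \<Rightarrow> 'x list \<Rightarrow> 'y list \<Rightarrow> real" where
  "Wn W n x v = (\<Prod>i<n. W (x!i) (v!i))"

lemma Exq_alt: "Exq P W n M L F =
     (\<Sum>c \<in> PiE {..<M} (\<lambda>_. seqs n).
       (\<Prod>m<M. Pn P n (c m)) *
       (\<Sum>y \<in> PiE ({..<M} \<times> {..<L}) (\<lambda>_. seqs n).
          (\<Prod>m<M. \<Prod>l<L. Wn W n (c m) (y (m, l))) * F c y))"
  unfolding Exq_def Pn_def Wn_def ..

lemma Exq_factor:
  fixes P :: "'x::finite \<Rightarrow> real" and W :: "'x \<Rightarrow> 'y::finite \<Rightarrow> real"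
  shows "Exq P W n M L (\<lambda>c y. (\<Prod>m<M. al m (c m)) * (\<Prod>m<M. \<Prod>l<L. ch m l (y (m,l)))) =
    (\<Prod>m<M. \<Sum>x\<in>seqs n. Pn P n x * al m x * (\<Prod>l<L. \<Sum>v\<in>seqs n. Wn W n x v * ch m l v))"
proof -
  have inner: "(\<Sum>y \<in> PiE ({..<M} \<times> {..<L}) (\<lambda>_. seqs n).
          (\<Prod>m<M. \<Prod>l<L. Wn W n (c m) (y (m, l))) * ((\<Prod>m<M. al m (c m)) * (\<Prod>m<M. \<Prod>l<L. ch m l (y (m,l)))))
     = (\<Prod>m<M. al m (c m)) * (\<Prod>m<M. \<Prod>l<L. \<Sum>v\<in>seqs n. Wn W n (c m) v * ch m l v)" for c
  proof -
    have "(\<Sum>y \<in> PiE ({..<M} \<times> {..<L}) (\<lambda>_. seqs n).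
          (\<Prod>m<M. \<Prod>l<L. Wn W n (c m) (y (m, l))) * ((\<Prod>m<M. al m (c m)) * (\<Prod>m<M. \<Prod>l<L. ch m l (y (m,l)))))
      = (\<Prod>m<M. al m (c m)) * (\<Sum>y \<in> PiE ({..<M} \<times> {..<L}) (\<lambda>_. seqs n).
           \<Prod>ml\<in>{..<M} \<times> {..<L}. Wn W n (c (fst ml)) (y ml) * ch (fst ml) (snd ml) (y ml))"
      by (simp add: sum_distrib_left prod.cartesian_product prod.distrib split_def mult.commute mult.left_commute)
    also have "(\<Sum>y \<in> PiE ({..<M} \<times> {..<L}) (\<lambda>_. seqs n).
           \<Prod>ml\<in>{..<M} \<times> {..<L}. Wn W n (c (fst ml)) (y ml) * ch (fst ml) (snd ml) (y ml))
        = (\<Prod>ml\<in>{..<M} \<times> {..<L}. \<Sum>v\<in>seqs n. Wn W n (c (fst ml)) v * ch (fst ml) (snd ml) v)"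
      by (rule prod_sum_PiE[symmetric]) (auto simp: finite_seqs)
    also have "\<dots> = (\<Prod>m<M. \<Prod>l<L. \<Sum>v\<in>seqs n. Wn W n (c m) v * ch m l v)"
      by (simp add: prod.cartesian_product split_def)
    finally show ?thesis .
  qed
  have "Exq P W n M L (\<lambda>c y. (\<Prod>m<M. al m (c m)) * (\<Prod>m<M. \<Prod>l<L. ch m l (y (m,l))))
     = (\<Sum>c \<in> PiE {..<M} (\<lambda>_. seqs n). \<Prod>m<M. Pn P n (c m) * al m (c m) * (\<Prod>l<L. \<Sum>v\<in>seqs n. Wn W n (c m) v * ch m l v))"
    unfolding Exq_alt inner by (simp add: prod.distrib mult.assoc)
  also have "\<dots> = (\<Prod>m<M. \<Sum>x\<in>seqs n. Pn P n x * al m x * (\<Prod>l<L. \<Sum>v\<in>seqs n. Wn W n x v * ch m l v))"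
    by (rule prod_sum_PiE[symmetric]) (auto simp: finite_seqs)
  finally show ?thesis .
qed

lemma Exq_mono:
  assumes "\<forall>x. P x \<ge> 0" "\<forall>x y. W x y \<ge> 0"
    and "\<And>c y. c \<in> PiE {..<M} (\<lambda>_. seqs n) \<Longrightarrow> y \<in> PiE ({..<M} \<times> {..<L}) (\<lambda>_. seqs n) \<Longrightarrow> F c y \<le> G c y"
  shows "Exq P W n M L F \<le> Exq P W n M L G"
  unfolding Exq_def using assms
  by (intro sum_mono mult_left_mono prod_nonneg sum_mono) auto

lemma Exq_sum: "finite S \<Longrightarrow> Exq P W n M L (\<lambda>c y. \<Sum>k\<in>S. F k c y) = (\<Sum>k\<in>S. Exq P W n M L (F k))"
  unfolding Exq_def by (simp add: sum_distrib_left sum.swap[of _ S])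

lemma Exq_cmult: "Exq P W n M L (\<lambda>c y. r * F c y) = r * Exq P W n M L F"
  unfolding Exq_def by (simp add: sum_distrib_left mult.left_commute)

lemma Exq_add: "Exq P W n M L (\<lambda>c y. F c y + G c y) = Exq P W n M L F + Exq P W n M L G"
  unfolding Exq_def by (simp add: sum.distrib distrib_left)

lemma Exq_diff: "Exq P W n M L (\<lambda>c y. F c y - G c y) = Exq P W n M L F - Exq P W n M L G"
  unfolding Exq_def by (simp add: sum_subtractf right_diff_distrib)

lemma prod_two:
  assumes "finite S" "a \<in> S" "b \<in> S" "a \<noteq> b"
  shows "(\<Prod>m\<in>S. (if m = a then A m else if m = b then B m else 1)) = A a * (B b :: real)"
proof -
  have "(\<Prod>m\<in>S. (if m = a then A m else if m = b then B m else 1))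
      = A a * (\<Prod>m\<in>S-{a}. (if m = a then A m else if m = b then B m else 1))"
    using assms by (subst prod.remove[of _ a]) auto
  also have "(\<Prod>m\<in>S-{a}. (if m = a then A m else if m = b then B m else 1)) = (\<Prod>m\<in>S-{a}. (if m = b then B m else 1))"
    by (intro prod.cong) auto
  also have "\<dots> = B b" using assms by simp
  finally show ?thesis .
qed

lemma sum_Pn: "(\<Sum>x\<in>seqs n. Pn P n (x :: 'x::finite list)) = (\<Sum>a\<in>UNIV. P a) ^ n"
  unfolding Pn_def using sum_prod_seqs[of "\<lambda>i. P" n] by simp

lemma sum_Wn: "(\<Sum>v\<in>seqs n. Wn W n x (v :: 'y::finite list)) = (\<Prod>i<n. \<Sum>b\<in>UNIV. W (x!i) b)"
  unfolding Wn_def using sum_prod_seqs[of "\<lambda>i b. W (x!i) b" n] by simp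

definition "dl v w = (if w = v then 1 else (0::real))"

locale chan =
  fixes P :: "'x::finite \<Rightarrow> real" and W :: "'x \<Rightarrow> 'y::finite \<Rightarrow> real"
  assumes P0: "\<forall>x. P x \<ge> 0" and P1: "(\<Sum>x\<in>UNIV. P x) = 1"
    and W0: "\<forall>x y. W x y \<ge> 0" and W1: "\<forall>x. (\<Sum>y\<in>UNIV. W x y) = 1"
begin

lemma Pn1: "(\<Sum>x\<in>seqs n. Pn P n x) = 1" using sum_Pn[of P n] P1 by simp
lemma Wn1: "(\<Sum>v\<in>seqs n. Wn W n x v) = 1" using sum_Wn[of W n x] W1 by simp
lemma Pn0: "Pn P n x \<ge> 0" using P0 unfolding Pn_def by (simp add: prod_nonneg)
lemma Wn0: "Wn W n x v \<ge> 0" using W0 unfolding Wn_def by (simp add: prod_nonneg)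

lemma Wn_delta: "v \<in> seqs n \<Longrightarrow> (\<Sum>w\<in>seqs n. Wn W n x w * dl v w) = Wn W n x v"
  by (simp add: finite_seqs dl_def if_distrib cong: if_cong)

definition blk :: "nat \<Rightarrow> nat \<Rightarrow> ('x list \<Rightarrow> real) \<Rightarrow> (nat \<Rightarrow> 'y list \<Rightarrow> real) \<Rightarrow> real" where
  "blk n L al ch = (\<Sum>x\<in>seqs n. Pn P n x * al x * (\<Prod>l<L. \<Sum>v\<in>seqs n. Wn W n x v * ch l v))"

lemma blk_11: "blk n L (\<lambda>_. 1) (\<lambda>_ _. 1) = 1"
  unfolding blk_def by (simp add: Wn1 Pn1)

lemma blk_g1: "blk n L gv (\<lambda>_ _. 1) = (\<Sum>x\<in>seqs n. Pn P n x * gv x)"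
  unfolding blk_def by (simp add: Wn1)

lemma blk_gd: "v \<in> seqs n \<Longrightarrow> l0 < L \<Longrightarrow>
   blk n L gv (\<lambda>l w. if l = l0 then dl v w else 1) = (\<Sum>x\<in>seqs n. Pn P n x * gv x * Wn W n x v)"
proof -
  assume v: "v \<in> seqs n" and l0: "l0 < L"
  have "(\<Prod>l<L. \<Sum>w\<in>seqs n. Wn W n x w * (if l = l0 then dl v w else 1))
      = (\<Prod>l<L. if l = l0 then Wn W n x v else 1)" for x
    by (intro prod.cong refl) (simp add: Wn_delta[OF v] Wn1)
  then show ?thesis unfolding blk_def using l0 by simp
qed

lemma Exq_blk: "Exq P W n M L (\<lambda>c y. (\<Prod>m<M. al m (c m)) * (\<Prod>m<M. \<Prod>l<L. ch m l (y (m,l))))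
   = (\<Prod>m<M. blk n L (al m) (ch m))"
  by (simp add: Exq_factor blk_def)


lemma E1:
  assumes "m0 < M" "l0 < L" "v \<in> seqs n"
  shows "Exq P W n M L (\<lambda>c y. gv (c m0) * dl v (y (m0,l0))) = (\<Sum>x\<in>seqs n. Pn P n x * gv x * Wn W n x v)"
proof -
  let ?al = "\<lambda>m x. if m = m0 then gv x else 1"
  let ?ch = "\<lambda>m l w. if m = m0 then (if l = l0 then dl v w else 1) else 1"
  have "(\<lambda>c y. gv (c m0) * dl v (y (m0,l0))) = (\<lambda>c y. (\<Prod>m<M. ?al m (c m)) * (\<Prod>m<M. \<Prod>l<L. ?ch m l (y (m,l))))"
  proof (intro ext)
    fix c y
    have "(\<Prod>m<M. \<Prod>l<L. ?ch m l (y (m,l))) = (\<Prod>m<M. if m = m0 then dl v (y (m0,l0)) else 1)"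
      by (intro prod.cong refl) (simp add: assms)
    then show "gv (c m0) * dl v (y (m0,l0)) = (\<Prod>m<M. ?al m (c m)) * (\<Prod>m<M. \<Prod>l<L. ?ch m l (y (m,l)))"
      using assms by simp
  qed
  note eqf = this
  have "Exq P W n M L (\<lambda>c y. gv (c m0) * dl v (y (m0,l0))) = (\<Prod>m<M. blk n L (?al m) (?ch m))"
    unfolding eqf by (rule Exq_blk)
  also have "\<dots> = (\<Prod>m<M. if m = m0 then blk n L gv (\<lambda>l w. if l = l0 then dl v w else 1) else 1)"
    by (intro prod.cong refl) (simp add: blk_11)
  also have "\<dots> = (\<Sum>x\<in>seqs n. Pn P n x * gv x * Wn W n x v)"
    using assms blk_gd[of v n l0 L gv] by simp
  finally show ?thesis .
qed

lemma E2:
  assumes "m0 < M" "m1 < M" "m0 \<noteq> m1" "l0 < L" "l1 < L" "v \<in> seqs n"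
  shows "Exq P W n M L (\<lambda>c y. (gv (c m0) * dl v (y (m0,l0))) * (gv (c m1) * dl v (y (m1,l1))))
     = (\<Sum>x\<in>seqs n. Pn P n x * gv x * Wn W n x v) * (\<Sum>x\<in>seqs n. Pn P n x * gv x * Wn W n x v)"
proof -
  let ?al = "\<lambda>m x. if m = m0 then gv x else if m = m1 then gv x else 1"
  let ?ch = "\<lambda>m l w. if m = m0 then (if l = l0 then dl v w else 1) else if m = m1 then (if l = l1 then dl v w else 1) else 1"
  have "(\<lambda>c y. (gv (c m0) * dl v (y (m0,l0))) * (gv (c m1) * dl v (y (m1,l1)))) = (\<lambda>c y. (\<Prod>m<M. ?al m (c m)) * (\<Prod>m<M. \<Prod>l<L. ?ch m l (y (m,l))))"
  proof (intro ext)
    fix c y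
    have "(\<Prod>m<M. \<Prod>l<L. ?ch m l (y (m,l))) = (\<Prod>m<M. if m = m0 then dl v (y (m0,l0)) else if m = m1 then dl v (y (m1,l1)) else 1)"
      by (intro prod.cong refl) (simp add: assms)
    also have "\<dots> = dl v (y (m0,l0)) * dl v (y (m1,l1))" using assms by (subst prod_two) auto
    finally have 1: "(\<Prod>m<M. \<Prod>l<L. ?ch m l (y (m,l))) = dl v (y (m0,l0)) * dl v (y (m1,l1))" .
    have 2: "(\<Prod>m<M. ?al m (c m)) = gv (c m0) * gv (c m1)" using assms by (subst prod_two) auto
    show "(gv (c m0) * dl v (y (m0,l0))) * (gv (c m1) * dl v (y (m1,l1))) = (\<Prod>m<M. ?al m (c m)) * (\<Prod>m<M. \<Prod>l<L. ?ch m l (y (m,l)))"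
      unfolding 1 2 by (simp add: algebra_simps)
  qed
  note eqf = this
  have "Exq P W n M L (\<lambda>c y. (gv (c m0) * dl v (y (m0,l0))) * (gv (c m1) * dl v (y (m1,l1)))) = (\<Prod>m<M. blk n L (?al m) (?ch m))"
    unfolding eqf by (rule Exq_blk)
  also have "\<dots> = (\<Prod>m<M. if m = m0 then blk n L gv (\<lambda>l w. if l = l0 then dl v w else 1)
       else if m = m1 then blk n L gv (\<lambda>l w. if l = l1 then dl v w else 1) else 1)"
    by (intro prod.cong refl) (simp add: blk_11)
  also have "\<dots> = blk n L gv (\<lambda>l w. if l = l0 then dl v w else 1) * blk n L gv (\<lambda>l w. if l = l1 then dl v w else 1)"
    using assms by (subst prod_two) auto
  also have "\<dots> = (\<Sum>x\<in>seqs n. Pn P n x * gv x * Wn W n x v) * (\<Sum>x\<in>seqs n. Pn P n x * gv x * Wn W n x v)"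
    using assms blk_gd[of v n l0 L gv] blk_gd[of v n l1 L gv] by simp
  finally show ?thesis .
qed

lemma E3:
  assumes "m0 < M" "m1 < M" "m0 \<noteq> m1" "l0 < L" "v \<in> seqs n"
  shows "Exq P W n M L (\<lambda>c y. (gv (c m0) * dl v (y (m0,l0))) * gv (c m1))
     = (\<Sum>x\<in>seqs n. Pn P n x * gv x * Wn W n x v) * (\<Sum>x\<in>seqs n. Pn P n x * gv x)"
proof -
  let ?al = "\<lambda>m x. if m = m0 then gv x else if m = m1 then gv x else 1"
  let ?ch = "\<lambda>m l w. if m = m0 then (if l = l0 then dl v w else 1) else if m = m1 then 1 else 1"
  have "(\<lambda>c y. (gv (c m0) * dl v (y (m0,l0))) * gv (c m1)) = (\<lambda>c y. (\<Prod>m<M. ?al m (c m)) * (\<Prod>m<M. \<Prod>l<L. ?ch m l (y (m,l))))"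
  proof (intro ext)
    fix c y
    have "(\<Prod>m<M. \<Prod>l<L. ?ch m l (y (m,l))) = (\<Prod>m<M. if m = m0 then dl v (y (m0,l0)) else 1)"
      by (intro prod.cong refl) (simp add: assms)
    also have "\<dots> = dl v (y (m0,l0))" using assms by simp
    finally have 1: "(\<Prod>m<M. \<Prod>l<L. ?ch m l (y (m,l))) = dl v (y (m0,l0))" .
    have 2: "(\<Prod>m<M. ?al m (c m)) = gv (c m0) * gv (c m1)" using assms by (subst prod_two) auto
    show "(gv (c m0) * dl v (y (m0,l0))) * gv (c m1) = (\<Prod>m<M. ?al m (c m)) * (\<Prod>m<M. \<Prod>l<L. ?ch m l (y (m,l)))"
      unfolding 1 2 by (simp add: algebra_simps)
  qed
  note eqf = this
  have "Exq P W n M L (\<lambda>c y. (gv (c m0) * dl v (y (m0,l0))) * gv (c m1)) = (\<Prod>m<M. blk n L (?al m) (?ch m))"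
    unfolding eqf by (rule Exq_blk)
  also have "\<dots> = (\<Prod>m<M. if m = m0 then blk n L gv (\<lambda>l w. if l = l0 then dl v w else 1)
       else if m = m1 then blk n L gv (\<lambda>_ _. 1) else 1)"
    by (intro prod.cong refl) (simp add: blk_11)
  also have "\<dots> = blk n L gv (\<lambda>l w. if l = l0 then dl v w else 1) * blk n L gv (\<lambda>_ _. 1)"
    using assms by (subst prod_two) auto
  also have "\<dots> = (\<Sum>x\<in>seqs n. Pn P n x * gv x * Wn W n x v) * (\<Sum>x\<in>seqs n. Pn P n x * gv x)"
    using assms blk_gd[of v n l0 L gv] blk_g1[of n L gv] by simp
  finally show ?thesis .
qed

end

lemma sum_if_card: "(\<Sum>l<(L::nat). if Q l then c else 0) = real (card {l. l < L \<and> Q l}) * (c::real)"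
proof -
  have "{..<L} \<inter> {l. Q l} = {l. l < L \<and> Q l}" by auto
  then show ?thesis by (subst sum.If_cases) simp_all
qed

lemma ml_sum:
  assumes M: "M \<ge> 1" and y: "\<And>m l. m < M \<Longrightarrow> l < L \<Longrightarrow> y (m,l) \<in> (seqs n :: 'y::finite list set)"
  shows "(\<Sum>m<M. \<Sum>l<L. ml_correct M L y m l)
     = (\<Sum>w\<in>seqs n. real (Max ((\<lambda>m'. card {l'. l' < L \<and> y (m', l') = w}) ` {..<M})))"
proof -
  define cnt where "cnt = (\<lambda>m' w. card {l'. l' < L \<and> y (m', l') = w})"
  define mx where "mx = (\<lambda>w. Max ((\<lambda>m'. cnt m' w) ` {..<M}))"
  define f where "f = (\<lambda>m w. if cnt m w = mx w then 1 / real (card {m'. m' < M \<and> cnt m' w = mx w}) else (0::real))"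
  have mlc: "ml_correct M L y m l = f m (y (m,l))" for m l
    unfolding ml_correct_def Let_def f_def mx_def cnt_def ..
  have step1: "(\<Sum>l<L. f m (y (m,l))) = (\<Sum>w\<in>seqs n. real (cnt m w) * f m w)" if "m < M" for m
  proof -
    have "(\<Sum>l<L. f m (y (m,l))) = (\<Sum>l<L. \<Sum>w\<in>seqs n. if y (m,l) = w then f m w else 0)"
      using y[OF that] by (intro sum.cong refl) (simp add: finite_seqs)
    also have "\<dots> = (\<Sum>w\<in>seqs n. \<Sum>l<L. if y (m,l) = w then f m w else 0)"
      by (rule sum.swap)
    also have "\<dots> = (\<Sum>w\<in>seqs n. real (cnt m w) * f m w)"
      by (intro sum.cong refl) (simp add: sum_if_card cnt_def)
    finally show ?thesis .
  qed
  have step2: "(\<Sum>m<M. real (cnt m w) * f m w) = real (mx w)" for w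
  proof -
    define T where "T = {m'. m' < M \<and> cnt m' w = mx w}"
    have "mx w \<in> (\<lambda>m'. cnt m' w) ` {..<M}" unfolding mx_def using M by (intro Max_in) (auto simp: lessThan_empty_iff)
    then have "T \<noteq> {}" unfolding T_def by auto
    moreover have "finite T" unfolding T_def by auto
    ultimately have cT: "card T > 0" by (simp add: card_gt_0_iff)
    have "(\<Sum>m<M. real (cnt m w) * f m w) = (\<Sum>m<M. if m \<in> T then real (mx w) / real (card T) else 0)"
      by (intro sum.cong refl) (auto simp: f_def T_def)
    also have "\<dots> = real (card T) * (real (mx w) / real (card T))"
    proof -
      have "{l. l < M \<and> l \<in> T} = T" unfolding T_def by auto
      then show ?thesis by (simp add: sum_if_card)
    qed
    also have "\<dots> = real (mx w)" using cT by simp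
    finally show ?thesis .
  qed
  have "(\<Sum>m<M. \<Sum>l<L. ml_correct M L y m l) = (\<Sum>m<M. \<Sum>w\<in>seqs n. real (cnt m w) * f m w)"
    by (intro sum.cong refl) (simp add: mlc step1)
  also have "\<dots> = (\<Sum>w\<in>seqs n. \<Sum>m<M. real (cnt m w) * f m w)" by (rule sum.swap)
  also have "\<dots> = (\<Sum>w\<in>seqs n. real (mx w))" by (simp add: step2)
  finally show ?thesis unfolding mx_def cnt_def .
qed

lemma share_bound:
  fixes a :: "'i \<Rightarrow> real"
  assumes "finite I" "\<And>i. i \<in> I \<Longrightarrow> a i \<ge> 0" "\<And>i. i \<in> I \<Longrightarrow> a i \<le> U" "U \<ge> 0"
  shows "(\<Sum>i\<in>I. a i / (1 + (\<Sum>j\<in>I-{i}. if a j > 0 then 1 else 0))) \<le> U"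
proof -
  define J where "J = {i\<in>I. a i > 0}"
  have fJ: "finite J" using assms unfolding J_def by auto
  have den: "1 + (\<Sum>j\<in>I-{i}. if a j > 0 then 1 else (0::real)) = real (card J)" if "i \<in> J" for i
  proof -
    have "(\<Sum>j\<in>I-{i}. if a j > 0 then 1 else (0::real)) = real (card {j \<in> I-{i}. a j > 0})"
      using assms(1) by (simp add: sum.If_cases Int_def)
    moreover have "{j \<in> I-{i}. a j > 0} = J - {i}" unfolding J_def by auto
    moreover have "card (J - {i}) = card J - 1" using that fJ by simp
    moreover have "card J \<ge> 1" using that fJ by (metis One_nat_def Suc_leI card_gt_0_iff empty_iff)
    ultimately show ?thesis by (simp add: of_nat_diff)
  qed
  have "(\<Sum>i\<in>I. a i / (1 + (\<Sum>j\<in>I-{i}. if a j > 0 then 1 else 0))) = (\<Sum>i\<in>J. a i / real (card J))"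
  proof -
    have "(\<Sum>i\<in>J. a i / (1 + (\<Sum>j\<in>I-{i}. if a j > 0 then 1 else 0))) = (\<Sum>i\<in>I. a i / (1 + (\<Sum>j\<in>I-{i}. if a j > 0 then 1 else 0)))"
    proof (rule sum.mono_neutral_left)
      show "finite I" by fact
      show "J \<subseteq> I" unfolding J_def by auto
      show "\<forall>i\<in>I - J. a i / (1 + (\<Sum>j\<in>I - {i}. if 0 < a j then 1 else 0)) = 0"
        using assms(2) unfolding J_def by (auto simp: antisym_conv2)
    qed
    then have "(\<Sum>i\<in>I. a i / (1 + (\<Sum>j\<in>I-{i}. if a j > 0 then 1 else 0))) = (\<Sum>i\<in>J. a i / (1 + (\<Sum>j\<in>I-{i}. if a j > 0 then 1 else 0)))" by simp
    also have "\<dots> = (\<Sum>i\<in>J. a i / real (card J))" by (intro sum.cong refl) (simp add: den)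
    finally show ?thesis .
  qed
  also have "\<dots> \<le> (\<Sum>i\<in>J. U / real (card J))"
    using assms(3) unfolding J_def by (intro sum_mono divide_right_mono) auto
  also have "\<dots> \<le> U" using assms(4) by (cases "card J = 0") auto
  finally show ?thesis .
qed

lemma tangent:
  fixes a N al :: real
  assumes "a \<ge> 0" "N \<ge> 0" "al \<ge> 0"
  shows "a * (1 + 2*al - N) / (1+al)^2 \<le> a / (1 + N)"
proof -
  have "(1+al)^2 - (1 + 2*al - N) * (1+N) = (al - N)^2" by (simp add: power2_eq_square algebra_simps)
  then have "(1 + 2*al - N) * (1+N) \<le> (1+al)^2" by (smt (verit) zero_le_power2)
  then have "(1 + 2*al - N) / (1+al)^2 \<le> 1 / (1+N)"
    using assms by (simp add: field_simps)
  then show ?thesis using assms(1) by (metis mult_left_mono times_divide_eq_right mult.right_neutral)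
qed

context chan begin

lemma cntr_card: "(\<Sum>l<(L::nat). dl v (y (m,l))) = real (card {l'. l' < L \<and> y (m, l') = v})"
  unfolding dl_def using sum_if_card[where L=L and Q="\<lambda>l. y (m,l) = v" and c=1] by simp

lemma core:
  fixes gv :: "'y list \<Rightarrow> 'x list \<Rightarrow> real"
  assumes g01: "\<And>v x. gv v x = 0 \<or> gv v x = 1" and M1: "M \<ge> 1" and L1: "L \<ge> 1"
  shows "Exq P W n M L (\<lambda>c y. \<Sum>m<M. \<Sum>l<L. (1 / real M) * (1 / real L) * ml_correct M L y m l)
    \<ge> (\<Sum>w\<in>seqs n. (\<Sum>x\<in>seqs n. Pn P n x * gv w x * Wn W n x w) /
        (1 + real M * min (real L * (\<Sum>x\<in>seqs n. Pn P n x * gv w x * Wn W n x w)) (\<Sum>x\<in>seqs n. Pn P n x * gv w x)))"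
proof -
  define mu where "mu = (\<lambda>w. \<Sum>x\<in>seqs n. Pn P n x * gv w x * Wn W n x w)"
  define pp where "pp = (\<lambda>w. \<Sum>x\<in>seqs n. Pn P n x * gv w x)"
  define ka where "ka = (\<lambda>w. min (real L * mu w) (pp w))"
  define al where "al = (\<lambda>w. real M * ka w)"
  define a where "a = (\<lambda>m w (c :: nat \<Rightarrow> 'x list) (y :: nat \<times> nat \<Rightarrow> 'y list). gv w (c m) * (\<Sum>l<L. dl w (y (m,l))))"
  define Nn where "Nn = (\<lambda>m w c y. \<Sum>m'\<in>{..<M}-{m}. if a m' w c y > 0 then 1 else (0::real))"
  have g0: "gv v x \<ge> 0" for v x using g01[of v x] by auto
  have mu0: "mu w \<ge> 0" for w unfolding mu_def using Pn0 Wn0 g0 by (intro sum_nonneg mult_nonneg_nonneg) auto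
  have pp0: "pp w \<ge> 0" for w unfolding pp_def using Pn0 g0 by (intro sum_nonneg mult_nonneg_nonneg) auto
  have ka0: "ka w \<ge> 0" for w unfolding ka_def using mu0 pp0 by simp
  have al0: "al w \<ge> 0" for w unfolding al_def using ka0 by simp
  have a0: "a m w c y \<ge> 0" for m w c y unfolding a_def using g0 by (simp add: dl_def sum_nonneg)
  have N0: "Nn m w c y \<ge> 0" for m w c y unfolding Nn_def by (simp add: sum_nonneg)
  have a_ind1: "(if a m' w c y > 0 then 1 else 0) \<le> a m' w c y" for m' w c y
  proof -
    have "a m' w c y = gv w (c m') * real (card {l'. l' < L \<and> y (m', l') = w})"
      unfolding a_def cntr_card ..
    then show ?thesis using g01[of w "c m'"] by auto
  qed
  have a_ind2: "(if a m' w c y > 0 then 1 else 0) \<le> gv w (c m')" for m' w c y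
    using g01[of w "c m'"] unfolding a_def by auto
  have A: "(\<Sum>m<M. \<Sum>l<L. (1 / real M) * (1 / real L) * ml_correct M L y m l)
      \<ge> (1 / (real M * real L)) * (\<Sum>w\<in>seqs n. \<Sum>m<M.
            (1 + 2 * al w) / (1 + al w)^2 * a m w c y - 1 / (1 + al w)^2 * (a m w c y * Nn m w c y))"
    if y: "y \<in> PiE ({..<M} \<times> {..<L}) (\<lambda>_. seqs n)" for c y
  proof -
    have ys: "y (m,l) \<in> seqs n" if "m < M" "l < L" for m l using y that by auto
    define mx where "mx = (\<lambda>w. real (Max ((\<lambda>m'. card {l'. l' < L \<and> y (m', l') = w}) ` {..<M})))"
    have "(\<Sum>m<M. \<Sum>l<L. (1 / real M) * (1 / real L) * ml_correct M L y m l)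
        = (1 / (real M * real L)) * (\<Sum>m<M. \<Sum>l<L. ml_correct M L y m l)"
      by (simp add: sum_distrib_left)
    also have "\<dots> = (1 / (real M * real L)) * (\<Sum>w\<in>seqs n. mx w)"
      unfolding mx_def using ml_sum[of M L y n, OF M1 ys] by simp
    finally have e1: "(\<Sum>m<M. \<Sum>l<L. (1 / real M) * (1 / real L) * ml_correct M L y m l)
        = (1 / (real M * real L)) * (\<Sum>w\<in>seqs n. mx w)" .
    have "(\<Sum>m<M. (1 + 2 * al w) / (1 + al w)^2 * a m w c y - 1 / (1 + al w)^2 * (a m w c y * Nn m w c y)) \<le> mx w" for w
    proof -
      have "(\<Sum>m<M. (1 + 2 * al w) / (1 + al w)^2 * a m w c y - 1 / (1 + al w)^2 * (a m w c y * Nn m w c y))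
          = (\<Sum>m<M. a m w c y * (1 + 2 * al w - Nn m w c y) / (1 + al w)^2)"
      proof (intro sum.cong refl)
        have e: "\<And>A D a N. (A::real)/D * a - 1/D*(a*N) = a*(A-N)/D"
          by (case_tac "D = 0") (simp_all add: field_simps)
        show "(1 + 2 * al w) / (1 + al w)^2 * a m w c y - 1 / (1 + al w)^2 * (a m w c y * Nn m w c y) =
         a m w c y * (1 + 2 * al w - Nn m w c y) / (1 + al w)^2" for m by (rule e)
      qed
      also have "\<dots> \<le> (\<Sum>m<M. a m w c y / (1 + Nn m w c y))"
        by (intro sum_mono tangent a0 N0 al0)
      also have "\<dots> \<le> mx w" unfolding Nn_def
      proof (rule share_bound)
        show "a i w c y \<le> mx w" if "i \<in> {..<M}" for i
        proof -
          have "a i w c y \<le> real (card {l'. l' < L \<and> y (i, l') = w})"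
            unfolding a_def cntr_card using g01[of w "c i"] by auto
          also have "\<dots> \<le> mx w" unfolding mx_def using that by (simp)
          finally show ?thesis .
        qed
        show "0 \<le> mx w" unfolding mx_def by simp
      qed (auto simp: a0)
      finally show ?thesis .
    qed
    then have "(\<Sum>w\<in>seqs n. \<Sum>m<M. (1 + 2 * al w) / (1 + al w)^2 * a m w c y - 1 / (1 + al w)^2 * (a m w c y * Nn m w c y))
       \<le> (\<Sum>w\<in>seqs n. mx w)" by (intro sum_mono)
    then show ?thesis unfolding e1 by (intro mult_left_mono) auto
  qed
  have Ea: "Exq P W n M L (a m w) = real L * mu w" if "m < M" "w \<in> seqs n" for m w
  proof -
    have "Exq P W n M L (a m w) = Exq P W n M L (\<lambda>c y. \<Sum>l<L. gv w (c m) * dl w (y (m,l)))"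
      unfolding a_def by (simp add: sum_distrib_left)
    also have "\<dots> = (\<Sum>l<L. Exq P W n M L (\<lambda>c y. gv w (c m) * dl w (y (m,l))))" by (rule Exq_sum) simp
    also have "\<dots> = (\<Sum>l<L. mu w)" unfolding mu_def by (intro sum.cong refl E1) (use that in auto)
    finally show ?thesis by simp
  qed
  have Eaa: "Exq P W n M L (\<lambda>c y. a m w c y * a m' w c y) = (real L * mu w) * (real L * mu w)"
    if "m < M" "m' < M" "m \<noteq> m'" "w \<in> seqs n" for m m' w
  proof -
    have "Exq P W n M L (\<lambda>c y. a m w c y * a m' w c y)
       = Exq P W n M L (\<lambda>c y. \<Sum>l<L. \<Sum>l'<L. (gv w (c m) * dl w (y (m,l))) * (gv w (c m') * dl w (y (m',l'))))"
      unfolding a_def by (simp add: sum_distrib_left sum_distrib_right mult_ac)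
    also have "\<dots> = (\<Sum>l<L. \<Sum>l'<L. Exq P W n M L (\<lambda>c y. (gv w (c m) * dl w (y (m,l))) * (gv w (c m') * dl w (y (m',l')))))"
      by (simp add: Exq_sum)
    also have "\<dots> = (\<Sum>l<L. \<Sum>l'<L. mu w * mu w)" unfolding mu_def
      by (intro sum.cong refl E2) (use that in auto)
    finally show ?thesis by (simp add: algebra_simps)
  qed
  have Eag: "Exq P W n M L (\<lambda>c y. a m w c y * gv w (c m')) = (real L * mu w) * pp w"
    if "m < M" "m' < M" "m \<noteq> m'" "w \<in> seqs n" for m m' w
  proof -
    have "Exq P W n M L (\<lambda>c y. a m w c y * gv w (c m'))
       = Exq P W n M L (\<lambda>c y. \<Sum>l<L. (gv w (c m) * dl w (y (m,l))) * gv w (c m'))"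
      unfolding a_def by (simp add: sum_distrib_left sum_distrib_right mult_ac)
    also have "\<dots> = (\<Sum>l<L. Exq P W n M L (\<lambda>c y. (gv w (c m) * dl w (y (m,l))) * gv w (c m')))"
      by (simp add: Exq_sum)
    also have "\<dots> = (\<Sum>l<L. mu w * pp w)" unfolding mu_def pp_def
      by (intro sum.cong refl E3) (use that in auto)
    finally show ?thesis by (simp add: algebra_simps)
  qed
  have EaN: "Exq P W n M L (\<lambda>c y. a m w c y * Nn m w c y) \<le> real M * (real L * mu w * ka w)"
    if "m < M" "w \<in> seqs n" for m w
  proof -
    have "Exq P W n M L (\<lambda>c y. a m w c y * Nn m w c y)
       = (\<Sum>m'\<in>{..<M}-{m}. Exq P W n M L (\<lambda>c y. a m w c y * (if a m' w c y > 0 then 1 else 0)))"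
      unfolding Nn_def by (simp add: sum_distrib_left Exq_sum)
    also have "\<dots> \<le> (\<Sum>m'\<in>{..<M}-{m}. real L * mu w * ka w)"
    proof (intro sum_mono)
      fix m' assume m': "m' \<in> {..<M}-{m}"
      have "Exq P W n M L (\<lambda>c y. a m w c y * (if a m' w c y > 0 then 1 else 0)) \<le> Exq P W n M L (\<lambda>c y. a m w c y * a m' w c y)"
        by (intro Exq_mono P0 W0 mult_left_mono a_ind1 a0)
      also have "\<dots> = real L * mu w * (real L * mu w)" using Eaa[of m m' w] that m' by auto
      finally have 1: "Exq P W n M L (\<lambda>c y. a m w c y * (if a m' w c y > 0 then 1 else 0)) \<le> real L * mu w * (real L * mu w)" .
      have "Exq P W n M L (\<lambda>c y. a m w c y * (if a m' w c y > 0 then 1 else 0)) \<le> Exq P W n M L (\<lambda>c y. a m w c y * gv w (c m'))"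
        by (intro Exq_mono P0 W0 mult_left_mono a_ind2 a0)
      also have "\<dots> = real L * mu w * pp w" using Eag[of m m' w] that m' by auto
      finally have 2: "Exq P W n M L (\<lambda>c y. a m w c y * (if a m' w c y > 0 then 1 else 0)) \<le> real L * mu w * pp w" .
      show "Exq P W n M L (\<lambda>c y. a m w c y * (if a m' w c y > 0 then 1 else 0)) \<le> real L * mu w * ka w"
        using 1 2 unfolding ka_def by (simp add: min_def)
    qed
    also have "\<dots> = real (M - 1) * (real L * mu w * ka w)" using that by simp
    also have "\<dots> \<le> real M * (real L * mu w * ka w)"
      using mu0 ka0 by (intro mult_right_mono) auto
    finally show ?thesis .
  qed
  have B: "Exq P W n M L (\<lambda>c y. (1 / (real M * real L)) * (\<Sum>w\<in>seqs n. \<Sum>m<M.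
            (1 + 2 * al w) / (1 + al w)^2 * a m w c y - 1 / (1 + al w)^2 * (a m w c y * Nn m w c y)))
      = (1 / (real M * real L)) * (\<Sum>w\<in>seqs n. \<Sum>m<M.
            (1 + 2 * al w) / (1 + al w)^2 * Exq P W n M L (a m w) - 1 / (1 + al w)^2 * Exq P W n M L (\<lambda>c y. a m w c y * Nn m w c y))"
    by (simp only: Exq_cmult Exq_sum finite_seqs finite_lessThan Exq_diff)
  have C: "(1 + 2 * al w) / (1 + al w)^2 * Exq P W n M L (a m w) - 1 / (1 + al w)^2 * Exq P W n M L (\<lambda>c y. a m w c y * Nn m w c y)
      \<ge> real L * mu w / (1 + al w)" if "m < M" "w \<in> seqs n" for m w
  proof -
    have "(1 + 2 * al w) / (1 + al w)^2 * Exq P W n M L (a m w) - 1 / (1 + al w)^2 * Exq P W n M L (\<lambda>c y. a m w c y * Nn m w c y)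
       \<ge> (1 + 2 * al w) / (1 + al w)^2 * (real L * mu w) - 1 / (1 + al w)^2 * (real M * (real L * mu w * ka w))"
      using Ea[OF that] EaN[OF that] al0[of w] by (simp add: divide_right_mono)
    also have "(1 + 2 * al w) / (1 + al w)^2 * (real L * mu w) - 1 / (1 + al w)^2 * (real M * (real L * mu w * ka w))
        = real L * mu w / (1 + al w)"
    proof -
      have am: "real M * (real L * mu w * ka w) = real L * mu w * al w" by (simp add: al_def)
      have nz: "1 + al w \<noteq> 0" using al0[of w] by linarith
      have "(1 + 2 * al w) / (1 + al w)^2 * (real L * mu w) - 1 / (1 + al w)^2 * (real L * mu w * al w)
          = (real L * mu w) * (1 + al w) / ((1 + al w) * (1 + al w))"
        by (simp add: power2_eq_square diff_divide_distrib[symmetric] algebra_simps)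
      also have "\<dots> = real L * mu w / (1 + al w)" using nz by simp
      finally show ?thesis unfolding am .
    qed
    finally show ?thesis .
  qed
  have "Exq P W n M L (\<lambda>c y. \<Sum>m<M. \<Sum>l<L. (1 / real M) * (1 / real L) * ml_correct M L y m l)
      \<ge> Exq P W n M L (\<lambda>c y. (1 / (real M * real L)) * (\<Sum>w\<in>seqs n. \<Sum>m<M.
            (1 + 2 * al w) / (1 + al w)^2 * a m w c y - 1 / (1 + al w)^2 * (a m w c y * Nn m w c y)))"
    by (intro Exq_mono P0 W0 A)
  moreover have "(1 / (real M * real L)) * (\<Sum>w\<in>seqs n. \<Sum>m<M.
            (1 + 2 * al w) / (1 + al w)^2 * Exq P W n M L (a m w) - 1 / (1 + al w)^2 * Exq P W n M L (\<lambda>c y. a m w c y * Nn m w c y))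
     \<ge> (1 / (real M * real L)) * (\<Sum>w\<in>seqs n. \<Sum>m<M. real L * mu w / (1 + al w))"
    using C by (intro mult_left_mono sum_mono) auto
  moreover have "(1 / (real M * real L)) * (\<Sum>w\<in>seqs n. \<Sum>m<M. real L * mu w / (1 + al w))
      = (\<Sum>w\<in>seqs n. mu w / (1 + al w))"
    using M1 L1 by (simp add: sum_distrib_left)
  moreover have "(\<Sum>w\<in>seqs n. mu w / (1 + al w)) = (\<Sum>w\<in>seqs n. (\<Sum>x\<in>seqs n. Pn P n x * gv w x * Wn W n x w) /
        (1 + real M * min (real L * (\<Sum>x\<in>seqs n. Pn P n x * gv w x * Wn W n x w)) (\<Sum>x\<in>seqs n. Pn P n x * gv w x)))"
    by (simp add: mu_def pp_def ka_def al_def)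
  ultimately show ?thesis unfolding B by linarith
qed

end

locale jd = chan P W for P :: "'x::finite \<Rightarrow> real" and W :: "'x \<Rightarrow> 'y::finite \<Rightarrow> real" +
  fixes Q :: "'y \<Rightarrow> 'x \<Rightarrow> real"
  assumes Qj: "Q \<in> joint_dists P W"
begin

lemma Q0: "Q y x \<ge> 0" using Qj unfolding joint_dists_def by auto
lemma Q1: "(\<Sum>y\<in>UNIV. \<Sum>x\<in>UNIV. Q y x) = 1" using Qj unfolding joint_dists_def by auto
lemma QPW: "Q y x > 0 \<Longrightarrow> P x * W x y > 0" using Qj unfolding joint_dists_def by auto
lemma QP: "Q y x > 0 \<Longrightarrow> P x > 0" using QPW[of y x] P0 W0
  by (metis less_eq_real_def mult_eq_0_iff)
lemma QW: "Q y x > 0 \<Longrightarrow> W x y > 0" using QPW[of y x] P0 W0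
  by (metis less_eq_real_def mult_eq_0_iff)

definition "T y = (\<Sum>x'\<in>UNIV. Q y x')"
lemma QT: "Q y x > 0 \<Longrightarrow> T y > 0"
  unfolding T_def using Q0 by (metis UNIV_I finite_class.finite_UNIV order_less_le_trans sum_nonneg_leq_bound)

definition "f1 y x = ln (Q y x / (P x * W x y))"
definition "f2 y x = ln ((Q y x / T y) / P x)"
definition "f3 y x = - ln (W x y)"

definition "typ n d v x = ((\<forall>i<n. Q (v!i) (x!i) > 0) \<and>
    \<bar>(\<Sum>i<n. f1 (v!i) (x!i)) - real n * divKL P W Q\<bar> < real n * d \<and>
    \<bar>(\<Sum>i<n. f2 (v!i) (x!i)) - real n * A_TV P Q\<bar> < real n * d \<and>
    \<bar>(\<Sum>i<n. f3 (v!i) (x!i)) - real n * B_TV W Q\<bar> < real n * d)"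

definition "Qn n v x = (\<Prod>i<n. Q (v!i) (x!i))"
definition "Vn n v x = (\<Prod>i<n. Q (v!i) (x!i) / T (v!i))"

lemma ln_prod_lt: "(\<And>i. i < (n::nat) \<Longrightarrow> f i > (0::real)) \<Longrightarrow> ln (\<Prod>i<n. f i) = (\<Sum>i<n. ln (f i))"
  by (rule ln_prod) fastforce+

lemma prod_pos_lt: "(\<And>i. i < (n::nat) \<Longrightarrow> f i > (0::real)) \<Longrightarrow> (\<Prod>i<n. f i) > 0"
  by (rule prod_pos) auto

lemma T1:
  assumes "typ n d v x"
  shows "Pn P n x \<le> Vn n v x * exp (- (real n * (A_TV P Q - d)))"
proof -
  have q: "Q (v!i) (x!i) > 0" if "i < n" for i using assms that unfolding typ_def by auto
  have pP: "Pn P n x > 0" unfolding Pn_def using QP[OF q] by (intro prod_pos_lt)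
  have pV: "Vn n v x > 0" unfolding Vn_def using q QT[OF q] by (intro prod_pos_lt) auto
  have "(\<Sum>i<n. f2 (v!i) (x!i)) = (\<Sum>i<n. ln (Q (v!i) (x!i) / T (v!i)) - ln (P (x!i)))"
  proof (intro sum.cong refl)
    fix i assume "i \<in> {..<n}"
    then have a: "Q (v!i) (x!i) > 0" "T (v!i) > 0" "P (x!i) > 0" using q QT[OF q] QP[OF q] by auto
    then have "Q (v!i) (x!i) / T (v!i) > 0" by simp
    then show "f2 (v!i) (x!i) = ln (Q (v!i) (x!i) / T (v!i)) - ln (P (x!i))"
      unfolding f2_def using a by (simp add: ln_divide_pos ln_mult_pos)
  qed
  also have "\<dots> = ln (Vn n v x) - ln (Pn P n x)"
  proof -
    have 1: "ln (Vn n v x) = (\<Sum>i<n. ln (Q (v!i) (x!i) / T (v!i)))"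
      unfolding Vn_def by (rule ln_prod_lt) (use q QT[OF q] in auto)
    have 2: "ln (Pn P n x) = (\<Sum>i<n. ln (P (x!i)))"
      unfolding Pn_def by (rule ln_prod_lt) (use QP[OF q] in auto)
    show ?thesis unfolding 1 2 sum_subtractf ..
  qed
  finally have "(\<Sum>i<n. f2 (v!i) (x!i)) = ln (Vn n v x) - ln (Pn P n x)" .
  moreover have "(\<Sum>i<n. f2 (v!i) (x!i)) \<ge> real n * (A_TV P Q - d)" using assms unfolding typ_def
    by (simp add: right_diff_distrib abs_less_iff)
  ultimately have "ln (Pn P n x) \<le> ln (Vn n v x) - real n * (A_TV P Q - d)" by linarith
  then have "Pn P n x \<le> exp (ln (Vn n v x) - real n * (A_TV P Q - d))"
    using pP by (metis exp_le_cancel_iff exp_ln)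
  then show ?thesis using pV by (simp add: exp_diff divide_inverse exp_minus)
qed

lemma T2:
  assumes "typ n d v x"
  shows "Wn W n x v \<le> exp (- (real n * (B_TV W Q - d)))"
proof -
  have q: "Q (v!i) (x!i) > 0" if "i < n" for i using assms that unfolding typ_def by auto
  have pW: "Wn W n x v > 0" unfolding Wn_def using QW[OF q] by (intro prod_pos_lt)
  have "(\<Sum>i<n. f3 (v!i) (x!i)) = - ln (Wn W n x v)"
    unfolding Wn_def f3_def using QW[OF q] by (simp add: ln_prod_lt sum_negf)
  moreover have "(\<Sum>i<n. f3 (v!i) (x!i)) \<ge> real n * (B_TV W Q - d)" using assms unfolding typ_def
    by (simp add: right_diff_distrib abs_less_iff)
  ultimately have "ln (Wn W n x v) \<le> - (real n * (B_TV W Q - d))" by linarith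
  then show ?thesis using pW by (metis exp_le_cancel_iff exp_ln)
qed

lemma T3:
  assumes "typ n d v x"
  shows "Qn n v x \<le> exp (real n * (divKL P W Q + d)) * (Pn P n x * Wn W n x v)"
proof -
  have q: "Q (v!i) (x!i) > 0" if "i < n" for i using assms that unfolding typ_def by auto
  have pQ: "Qn n v x > 0" unfolding Qn_def using q by (intro prod_pos_lt)
  have pPW: "Pn P n x * Wn W n x v > 0" unfolding Wn_def Pn_def using QW[OF q] QP[OF q]
    by (intro mult_pos_pos prod_pos_lt)
  have "(\<Sum>i<n. f1 (v!i) (x!i)) = (\<Sum>i<n. ln (Q (v!i) (x!i)) - ln (P (x!i)) - ln (W (x!i) (v!i)))"
  proof (intro sum.cong refl)
    fix i assume "i \<in> {..<n}"
    then have a: "Q (v!i) (x!i) > 0" "W (x!i) (v!i) > 0" "P (x!i) > 0" using q QW[OF q] QP[OF q] by auto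
    then have "P (x!i) * W (x!i) (v!i) > 0" by simp
    then show "f1 (v!i) (x!i) = ln (Q (v!i) (x!i)) - ln (P (x!i)) - ln (W (x!i) (v!i))"
      unfolding f1_def using a by (simp add: ln_divide_pos ln_mult_pos)
  qed
  also have "\<dots> = ln (Qn n v x) - ln (Pn P n x) - ln (Wn W n x v)"
  proof -
    have 1: "ln (Qn n v x) = (\<Sum>i<n. ln (Q (v!i) (x!i)))"
      unfolding Qn_def by (rule ln_prod_lt) (use q in auto)
    have 2: "ln (Pn P n x) = (\<Sum>i<n. ln (P (x!i)))"
      unfolding Pn_def by (rule ln_prod_lt) (use QP[OF q] in auto)
    have 3: "ln (Wn W n x v) = (\<Sum>i<n. ln (W (x!i) (v!i)))"
      unfolding Wn_def by (rule ln_prod_lt) (use QW[OF q] in auto)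
    show ?thesis unfolding 1 2 3 sum_subtractf ..
  qed
  finally have "(\<Sum>i<n. f1 (v!i) (x!i)) = ln (Qn n v x) - ln (Pn P n x) - ln (Wn W n x v)" .
  moreover have "(\<Sum>i<n. f1 (v!i) (x!i)) \<le> real n * (divKL P W Q + d)" using assms unfolding typ_def
    by (simp add: distrib_left abs_less_iff)
  moreover have "ln (Pn P n x * Wn W n x v) = ln (Pn P n x) + ln (Wn W n x v)"
  proof (rule ln_mult_pos)
    show "Pn P n x > 0" unfolding Pn_def using QP[OF q] by (intro prod_pos_lt)
    show "Wn W n x v > 0" unfolding Wn_def using QW[OF q] by (intro prod_pos_lt)
  qed
  ultimately have "ln (Qn n v x) \<le> real n * (divKL P W Q + d) + ln (Pn P n x * Wn W n x v)"
    by linarith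
  then have "Qn n v x \<le> exp (real n * (divKL P W Q + d) + ln (Pn P n x * Wn W n x v))"
    using pQ by (metis exp_le_cancel_iff exp_ln)
  then show ?thesis using pPW by (simp add: exp_add)
qed

lemma S1: "(\<Sum>x\<in>seqs n. Vn n v x) \<le> 1"
proof -
  have "(\<Sum>x\<in>seqs n. Vn n v x) = (\<Prod>i<n. \<Sum>a\<in>UNIV. Q (v!i) a / T (v!i))"
    unfolding Vn_def using sum_prod_seqs[of "\<lambda>i a. Q (v!i) a / T (v!i)" n] by simp
  also have "\<dots> \<le> 1"
  proof (rule prod_le_1)
    fix i
    have e: "(\<Sum>a\<in>UNIV. Q (v!i) a / T (v!i)) = T (v!i) / T (v!i)"
      unfolding sum_divide_distrib[symmetric] T_def ..
    have "T (v!i) \<ge> 0" unfolding T_def using Q0 by (simp add: sum_nonneg)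
    then have "0 \<le> (\<Sum>a\<in>UNIV. Q (v!i) a / T (v!i))" using Q0 by (intro sum_nonneg divide_nonneg_nonneg) auto
    moreover have "(\<Sum>a\<in>UNIV. Q (v!i) a / T (v!i)) \<le> 1"
    proof (cases "T (v!i) = 0")
      case True then show ?thesis by simp
    next
      case False then show ?thesis using e by simp
    qed
    ultimately show "0 \<le> (\<Sum>a\<in>UNIV. Q (v!i) a / T (v!i)) \<and> (\<Sum>a\<in>UNIV. Q (v!i) a / T (v!i)) \<le> 1" ..
  qed
  finally show ?thesis .
qed

end

context jd begin

definition "qz z = Q (fst z) (snd z)"
definition "hh f mu z = (if qz z > 0 then f (fst z) (snd z) - mu else (0::real))"

lemma sum_pairs_UNIV: "(\<Sum>z\<in>UNIV. F z) = (\<Sum>y\<in>UNIV. \<Sum>x\<in>UNIV. F (y,x))"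
proof -
  have "(\<Sum>y\<in>UNIV. \<Sum>x\<in>UNIV. F (y,x)) = (\<Sum>z\<in>UNIV \<times> UNIV. F z)"
    by (simp add: sum.cartesian_product)
  then show ?thesis by simp
qed

lemma qz1: "(\<Sum>z\<in>UNIV. qz z) = 1" unfolding sum_pairs_UNIV qz_def using Q1 by simp

lemma hh_mean:
  assumes "mu = (\<Sum>y\<in>UNIV. \<Sum>x\<in>UNIV. if Q y x > 0 then Q y x * f y x else 0)"
  shows "(\<Sum>z\<in>UNIV. qz z * hh f mu z) = 0"
proof -
  have "(\<Sum>z\<in>UNIV. qz z * hh f mu z) = (\<Sum>z\<in>UNIV. (if qz z > 0 then qz z * f (fst z) (snd z) else 0) - mu * qz z)"
  proof (intro sum.cong refl)
    fix z
    show "qz z * hh f mu z = (if qz z > 0 then qz z * f (fst z) (snd z) else 0) - mu * qz z"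
    proof (cases "qz z > 0")
      case True then show ?thesis unfolding hh_def by (simp add: algebra_simps)
    next
      case False then have "qz z = 0" using Q0 unfolding qz_def by (metis less_eq_real_def)
      then show ?thesis unfolding hh_def by simp
    qed
  qed
  also have "\<dots> = mu - mu * 1"
    unfolding sum_subtractf sum_distrib_left[symmetric] qz1
    unfolding sum_pairs_UNIV qz_def assms fst_conv snd_conv ..
  finally show ?thesis by simp
qed

lemma Qn_map: "zs \<in> seqs n \<Longrightarrow> Qn n (map fst zs) (map snd zs) = (\<Prod>i<n. qz (zs!i))"
  unfolding Qn_def qz_def seqs_def by (intro prod.cong) auto

lemma sum_map: "zs \<in> seqs n \<Longrightarrow> (\<Sum>i<n. f (map fst zs ! i) (map snd zs ! i)) = (\<Sum>i<n. f (fst (zs!i)) (snd (zs!i)))"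
  unfolding seqs_def by (intro sum.cong) auto

definition "gt n d v x = (if typ n d v x then 1 else (0::real))"

lemma Qn0: "Qn n v x \<ge> 0" unfolding Qn_def using Q0 by (simp add: prod_nonneg)

lemma pointwise:
  assumes zs: "zs \<in> seqs n" and n: "n > 0" and d: "d > 0"
  shows "Qn n (map fst zs) (map snd zs) * (1 - gt n d (map fst zs) (map snd zs))
     \<le> Qn n (map fst zs) (map snd zs) * (((\<Sum>i<n. hh f1 (divKL P W Q) (zs!i))^2
          + (\<Sum>i<n. hh f2 (A_TV P Q) (zs!i))^2 + (\<Sum>i<n. hh f3 (B_TV W Q) (zs!i))^2) / (real n * d)^2)"
proof -
  let ?v = "map fst zs" and ?x = "map snd zs"
  let ?S = "((\<Sum>i<n. hh f1 (divKL P W Q) (zs!i))^2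
          + (\<Sum>i<n. hh f2 (A_TV P Q) (zs!i))^2 + (\<Sum>i<n. hh f3 (B_TV W Q) (zs!i))^2) / (real n * d)^2"
  have S0: "?S \<ge> 0" by simp
  show ?thesis
  proof (cases "\<forall>i<n. qz (zs!i) > 0")
    case False
    then obtain i where "i < n" "\<not> qz (zs!i) > 0" by auto
    then have "qz (zs!i) = 0" using Q0 unfolding qz_def by (metis less_eq_real_def)
    then have "Qn n ?v ?x = 0" unfolding Qn_map[OF zs] using \<open>i < n\<close>
      by (metis finite_lessThan lessThan_iff prod_zero_iff)
    then show ?thesis by simp
  next
    case True
    have hs: "(\<Sum>i<n. hh f mu (zs!i)) = (\<Sum>i<n. f (?v!i) (?x!i)) - real n * mu" for f mu
    proof -
      have "(\<Sum>i<n. hh f mu (zs!i)) = (\<Sum>i<n. f (fst (zs!i)) (snd (zs!i)) - mu)"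
        using True unfolding hh_def by (intro sum.cong) auto
      then show ?thesis unfolding sum_map[OF zs] by (simp add: sum_subtractf)
    qed
    have tq: "\<forall>i<n. Q (?v!i) (?x!i) > 0" using True zs unfolding qz_def seqs_def by auto
    show ?thesis
    proof (cases "typ n d ?v ?x")
      case True then show ?thesis unfolding gt_def using Qn0 S0 by simp
    next
      case False
      have big: "(real n * d)^2 \<le> t^2" if "\<not> \<bar>t\<bar> < real n * d" for t
      proof -
        have "real n * d \<le> \<bar>t\<bar>" using that by simp
        then have "(real n * d)^2 \<le> \<bar>t\<bar>^2" using n d by (intro power_mono) auto
        then show ?thesis by simp
      qed
      have "(real n * d)^2 \<le> (\<Sum>i<n. hh f1 (divKL P W Q) (zs!i))^2
          + (\<Sum>i<n. hh f2 (A_TV P Q) (zs!i))^2 + (\<Sum>i<n. hh f3 (B_TV W Q) (zs!i))^2"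
        using False tq big unfolding typ_def hs
        by (smt (verit) zero_le_power2)
      then have "1 \<le> ?S" using n d by simp
      then have "Qn n ?v ?x * 1 \<le> Qn n ?v ?x * ?S" using Qn0[of n ?v ?x] by (rule mult_left_mono)
      then show ?thesis unfolding gt_def using False by simp
    qed
  qed
qed

lemma cheb:
  assumes d: "d > 0"
  shows "\<exists>N0. \<forall>n\<ge>N0. (\<Sum>v\<in>seqs n. \<Sum>x\<in>seqs n. Qn n v x * gt n d v x) \<ge> 1/2"
proof -
  define s1 where "s1 = (\<Sum>z\<in>UNIV. qz z * (hh f1 (divKL P W Q) z)^2)"
  define s2 where "s2 = (\<Sum>z\<in>UNIV. qz z * (hh f2 (A_TV P Q) z)^2)"
  define s3 where "s3 = (\<Sum>z\<in>UNIV. qz z * (hh f3 (B_TV W Q) z)^2)"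
  have m1: "(\<Sum>z\<in>UNIV. qz z * hh f1 (divKL P W Q) z) = 0"
    unfolding divKL_def f1_def by (rule hh_mean) (rule refl)
  have m2: "(\<Sum>z\<in>UNIV. qz z * hh f2 (A_TV P Q) z) = 0"
    unfolding A_TV_def f2_def T_def by (rule hh_mean) (rule refl)
  have m3: "(\<Sum>z\<in>UNIV. qz z * hh f3 (B_TV W Q) z) = 0"
    unfolding B_TV_def f3_def by (rule hh_mean) (rule refl)
  obtain N0 :: nat where N0: "real N0 \<ge> max 1 (2 * (s1 + s2 + s3) / d^2)" by (meson real_arch_simple)
  have "(\<Sum>v\<in>seqs n. \<Sum>x\<in>seqs n. Qn n v x * gt n d v x) \<ge> 1/2" if "n \<ge> N0" for n
  proof -
    have nN: "real n \<ge> max 1 (2 * (s1 + s2 + s3) / d^2)" using N0 that by linarith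
    then have n: "n > 0" by simp
    define F where "F = (\<lambda>zs. Qn n (map fst zs) (map snd zs))"
    define Sk where "Sk = (\<lambda>zs. ((\<Sum>i<n. hh f1 (divKL P W Q) (zs!i))^2
          + (\<Sum>i<n. hh f2 (A_TV P Q) (zs!i))^2 + (\<Sum>i<n. hh f3 (B_TV W Q) (zs!i))^2))"
    have Fq: "F zs = (\<Prod>i<n. qz (zs!i))" if "zs \<in> seqs n" for zs unfolding F_def using Qn_map[OF that] .
    have F1: "(\<Sum>zs\<in>seqs n. F zs) = 1"
      using moments(1)[OF qz1 m1, of n] by (simp add: Fq cong: sum.cong)
    have mom: "(\<Sum>zs\<in>seqs n. F zs * (\<Sum>i<n. hh f mu (zs!i))^2) = real n * (\<Sum>z\<in>UNIV. qz z * (hh f mu z)^2)"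
      if "(\<Sum>z\<in>UNIV. qz z * hh f mu z) = 0" for f mu
      using moments(3)[OF qz1 that, of n] by (simp add: Fq cong: sum.cong)
    have "(\<Sum>zs\<in>seqs n. F zs * (1 - gt n d (map fst zs) (map snd zs))) \<le> (\<Sum>zs\<in>seqs n. F zs * (Sk zs / (real n * d)^2))"
      unfolding F_def Sk_def by (intro sum_mono pointwise n d)
    also have "\<dots> = (\<Sum>zs\<in>seqs n. F zs * Sk zs) / (real n * d)^2"
      by (simp add: sum_divide_distrib)
    also have "(\<Sum>zs\<in>seqs n. F zs * Sk zs) = real n * (s1 + s2 + s3)"
      unfolding Sk_def distrib_left sum.distrib mom[OF m1] mom[OF m2] mom[OF m3] s1_def s2_def s3_def
      by (simp add: algebra_simps)
    also have "real n * (s1 + s2 + s3) / (real n * d)^2 = (s1 + s2 + s3) / d^2 / real n"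
      using n d by (simp add: power2_eq_square field_simps)
    also have "\<dots> \<le> 1/2"
    proof -
      have a: "2 * (s1 + s2 + s3) / d^2 \<le> real n" using nN by (simp only: max.bounded_iff)
      have "(s1 + s2 + s3) / d^2 = (2 * (s1 + s2 + s3) / d^2) / 2" using d by (simp add: field_simps)
      then have "(s1 + s2 + s3) / d^2 \<le> real n / 2" using a by linarith
      then have "(s1 + s2 + s3) / d^2 / real n \<le> (real n / 2) / real n" by (rule divide_right_mono) simp
      then show ?thesis using n by simp
    qed
    finally have "(\<Sum>zs\<in>seqs n. F zs * (1 - gt n d (map fst zs) (map snd zs))) \<le> 1/2" .
    then have "(\<Sum>zs\<in>seqs n. F zs * gt n d (map fst zs) (map snd zs)) \<ge> 1/2"
      using F1 by (simp add: right_diff_distrib sum_subtractf)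
    then show ?thesis unfolding sum_seqs_pairs F_def .
  qed
  then show ?thesis by blast
qed

end

lemma nat_floor_exp:
  assumes "t \<ge> 0"
  shows "nat \<lfloor>exp t\<rfloor> \<ge> 1" "real (nat \<lfloor>exp t\<rfloor>) \<le> exp t"
proof -
  have e1: "exp t \<ge> 1" using assms by simp
  then show "nat \<lfloor>exp t\<rfloor> \<ge> 1" by (simp add: le_nat_floor)
  have "real (nat \<lfloor>exp t\<rfloor>) = real_of_int \<lfloor>exp t\<rfloor>" using e1 by simp
  then show "real (nat \<lfloor>exp t\<rfloor>) \<le> exp t" by simp
qed

lemma succ_Ex: "succ_prob P W R K n = Exq P W n (nmsg R n) (ncloud K n)
   (\<lambda>c y. \<Sum>m<nmsg R n. \<Sum>l<ncloud K n. (1 / real (nmsg R n)) * (1 / real (ncloud K n)) * ml_correct (nmsg R n) (ncloud K n) y m l)"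
  unfolding succ_prob_def Exq_def Let_def ..

context jd begin

lemma succ_lb:
  assumes d: "d > 0" and R: "R \<ge> 0" and K: "K \<ge> 0"
  shows "\<exists>N. \<forall>n\<ge>N. succ_prob P W R K n \<ge> exp (- (real n * (divKL P W Q + pos (R - A_TV P Q - pos (B_TV W Q - K)) + 3 * d))) / 4"
proof -
  obtain N0 where N0: "\<And>n. n \<ge> N0 \<Longrightarrow> (\<Sum>v\<in>seqs n. \<Sum>x\<in>seqs n. Qn n v x * gt n d v x) \<ge> 1/2"
    using cheb[OF d] by blast
  define Dv where "Dv = divKL P W Q"
  define Av where "Av = A_TV P Q"
  define Bv where "Bv = B_TV W Q"
  define tt where "tt = R - Av - pos (Bv - K)"
  have "succ_prob P W R K n \<ge> exp (- (real n * (Dv + pos tt + 3 * d))) / 4" if n: "n \<ge> N0" for n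
  proof -
    define M where "M = nmsg R n"
    define L where "L = ncloud K n"
    have M1: "M \<ge> 1" and Mb: "real M \<le> exp (real n * R)"
      unfolding M_def nmsg_def using nat_floor_exp[of "real n * R"] R by auto
    have L1: "L \<ge> 1" and Lb: "real L \<le> exp (real n * K)"
      unfolding L_def ncloud_def using nat_floor_exp[of "real n * K"] K by auto
    define gv where "gv = gt n d"
    have g01: "gv v x = 0 \<or> gv v x = 1" for v x unfolding gv_def gt_def by auto
    have g0: "gv v x \<ge> 0" for v x using g01[of v x] by auto
    define mu where "mu = (\<lambda>w. \<Sum>x\<in>seqs n. Pn P n x * gv w x * Wn W n x w)"
    define pp where "pp = (\<lambda>w. \<Sum>x\<in>seqs n. Pn P n x * gv w x)"
    have mu0: "mu w \<ge> 0" for w unfolding mu_def using Pn0 Wn0 g0 by (intro sum_nonneg mult_nonneg_nonneg) auto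
    have pp0: "pp w \<ge> 0" for w unfolding pp_def using Pn0 g0 by (intro sum_nonneg mult_nonneg_nonneg) auto
    have core': "succ_prob P W R K n \<ge> (\<Sum>w\<in>seqs n. mu w / (1 + real M * min (real L * mu w) (pp w)))"
      unfolding succ_Ex M_def[symmetric] L_def[symmetric] mu_def pp_def
      by (rule core[OF g01 M1 L1])
    have pp_le: "pp w \<le> exp (- (real n * (Av - d)))" for w
    proof -
      have "pp w \<le> (\<Sum>x\<in>seqs n. Vn n w x * exp (- (real n * (Av - d))) * gv w x)"
        unfolding pp_def
      proof (intro sum_mono)
        fix x
        show "Pn P n x * gv w x \<le> Vn n w x * exp (- (real n * (Av - d))) * gv w x"
        proof (cases "typ n d w x")
          case True then show ?thesis using T1[OF True] unfolding gv_def gt_def Av_def by simp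
        next
          case False then show ?thesis unfolding gv_def gt_def by simp
        qed
      qed
      also have "\<dots> \<le> (\<Sum>x\<in>seqs n. Vn n w x * exp (- (real n * (Av - d))))"
      proof (intro sum_mono)
        fix x
        have "Vn n w x \<ge> 0" unfolding Vn_def T_def using Q0 by (intro prod_nonneg divide_nonneg_nonneg sum_nonneg) auto
        then show "Vn n w x * exp (- (real n * (Av - d))) * gv w x \<le> Vn n w x * exp (- (real n * (Av - d)))"
          using g01[of w x] by auto
      qed
      also have "\<dots> = (\<Sum>x\<in>seqs n. Vn n w x) * exp (- (real n * (Av - d)))" by (simp add: sum_distrib_right)
      also have "\<dots> \<le> exp (- (real n * (Av - d)))" using S1[of n w] by simp
      finally show ?thesis .
    qed
    have mu_le: "mu w \<le> exp (- (real n * (Bv - d))) * pp w" for w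
    proof -
      have "mu w \<le> (\<Sum>x\<in>seqs n. Pn P n x * gv w x * exp (- (real n * (Bv - d))))"
        unfolding mu_def
      proof (intro sum_mono)
        fix x
        show "Pn P n x * gv w x * Wn W n x w \<le> Pn P n x * gv w x * exp (- (real n * (Bv - d)))"
        proof (cases "typ n d w x")
          case True then show ?thesis using T2[OF True] Pn0[of n x] unfolding gv_def gt_def Bv_def by (simp add: mult_left_mono)
        next
          case False then show ?thesis unfolding gv_def gt_def by simp
        qed
      qed
      also have "\<dots> = exp (- (real n * (Bv - d))) * pp w" unfolding pp_def by (simp add: sum_distrib_left mult_ac)
      finally show ?thesis .
    qed
    define Den where "Den = 2 * exp (real n * (pos tt + 2 * d))"
    have den: "1 + real M * min (real L * mu w) (pp w) \<le> Den" for w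
    proof -
      have "real M * min (real L * mu w) (pp w) \<le> exp (real n * (tt + 2 * d))"
      proof (cases "Bv \<le> K")
        case True
        have "real M * min (real L * mu w) (pp w) \<le> exp (real n * R) * exp (- (real n * (Av - d)))"
          using Mb pp_le[of w] mu0[of w] pp0[of w] by (intro mult_mono) auto
        also have "\<dots> = exp (real n * (R - Av + d))" by (simp add: exp_add[symmetric] algebra_simps)
        also have "\<dots> \<le> exp (real n * (tt + 2 * d))"
          unfolding tt_def pos_def using True d by (intro exp_mono mult_left_mono) auto
        finally show ?thesis .
      next
        case False
        have "real L * mu w \<le> exp (real n * K) * (exp (- (real n * (Bv - d))) * exp (- (real n * (Av - d))))"
          using Lb mu_le[of w] pp_le[of w] mu0[of w]
          by (intro mult_mono) (auto intro: order_trans)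
        then have "real M * min (real L * mu w) (pp w) \<le> exp (real n * R) * (exp (real n * K) * (exp (- (real n * (Bv - d))) * exp (- (real n * (Av - d)))))"
          using Mb mu0[of w] pp0[of w] by (intro mult_mono) auto
        also have "\<dots> = exp (real n * (R + K - Bv - Av + 2 * d))" by (simp add: exp_add[symmetric] algebra_simps)
        also have "\<dots> = exp (real n * (tt + 2 * d))"
          unfolding tt_def pos_def using False by (simp add: algebra_simps)
        finally show ?thesis .
      qed
      also have "\<dots> \<le> exp (real n * (pos tt + 2 * d))" unfolding pos_def by (intro exp_mono mult_left_mono) auto
      finally have a: "real M * min (real L * mu w) (pp w) \<le> exp (real n * (pos tt + 2 * d))" .
      have b: "1 \<le> exp (real n * (pos tt + 2 * d))" unfolding pos_def using d by simp
      show ?thesis unfolding Den_def using a b by linarith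
    qed
    have "(\<Sum>w\<in>seqs n. mu w / (1 + real M * min (real L * mu w) (pp w))) \<ge> (\<Sum>w\<in>seqs n. mu w / Den)"
    proof (rule sum_mono)
      fix w
      have "0 \<le> real M * min (real L * mu w) (pp w)" using mu0[of w] pp0[of w] by simp
      moreover have "0 < Den" unfolding Den_def by simp
      ultimately have "0 < Den * (1 + real M * min (real L * mu w) (pp w))" by simp
      then show "mu w / Den \<le> mu w / (1 + real M * min (real L * mu w) (pp w))"
        by (rule divide_left_mono[OF den mu0])
    qed
    moreover have "(\<Sum>w\<in>seqs n. mu w) \<ge> exp (- (real n * (Dv + d))) / 2"
    proof -
      have "(\<Sum>w\<in>seqs n. mu w) \<ge> (\<Sum>w\<in>seqs n. \<Sum>x\<in>seqs n. exp (- (real n * (Dv + d))) * (Qn n w x * gv w x))"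
        unfolding mu_def
      proof (intro sum_mono)
        fix w x
        show "exp (- (real n * (Dv + d))) * (Qn n w x * gv w x) \<le> Pn P n x * gv w x * Wn W n x w"
        proof (cases "typ n d w x")
          case True
          have "exp (- (real n * (Dv + d))) * Qn n w x \<le> exp (- (real n * (Dv + d))) * (exp (real n * (Dv + d)) * (Pn P n x * Wn W n x w))"
            using T3[OF True] unfolding Dv_def by (intro mult_left_mono) auto
          also have "\<dots> = Pn P n x * Wn W n x w"
          proof -
            have "exp (- (real n * (Dv + d))) * exp (real n * (Dv + d)) = 1" by (simp add: exp_minus)
            then show ?thesis by (metis mult.assoc mult_1)
          qed
          finally show ?thesis unfolding gv_def gt_def using True by simp
        next
          case False then show ?thesis unfolding gv_def gt_def by simp
        qed
      qed
      also have "(\<Sum>w\<in>seqs n. \<Sum>x\<in>seqs n. exp (- (real n * (Dv + d))) * (Qn n w x * gv w x))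
          = exp (- (real n * (Dv + d))) * (\<Sum>w\<in>seqs n. \<Sum>x\<in>seqs n. Qn n w x * gt n d w x)"
        unfolding gv_def by (simp add: sum_distrib_left)
      finally have s1: "exp (- (real n * (Dv + d))) * (\<Sum>w\<in>seqs n. \<Sum>x\<in>seqs n. Qn n w x * gt n d w x) \<le> (\<Sum>w\<in>seqs n. mu w)" .
      have "exp (- (real n * (Dv + d))) * (1/2) \<le> exp (- (real n * (Dv + d))) * (\<Sum>w\<in>seqs n. \<Sum>x\<in>seqs n. Qn n w x * gt n d w x)"
        using N0[OF n] by (intro mult_left_mono) auto
      then show ?thesis using s1 by linarith
    qed
    ultimately have "succ_prob P W R K n \<ge> (exp (- (real n * (Dv + d))) / 2) / Den"
    proof -
      assume a1: "(\<Sum>w\<in>seqs n. mu w / (1 + real M * min (real L * mu w) (pp w))) \<ge> (\<Sum>w\<in>seqs n. mu w / Den)"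
        and a2: "(\<Sum>w\<in>seqs n. mu w) \<ge> exp (- (real n * (Dv + d))) / 2"
      have "(\<Sum>w\<in>seqs n. mu w / Den) = (\<Sum>w\<in>seqs n. mu w) / Den" by (rule sum_divide_distrib[symmetric])
      moreover have "(exp (- (real n * (Dv + d))) / 2) / Den \<le> (\<Sum>w\<in>seqs n. mu w) / Den"
        using a2 by (rule divide_right_mono) (simp add: Den_def)
      ultimately show ?thesis using a1 core' by linarith
    qed
    also have "(exp (- (real n * (Dv + d))) / 2) / Den = exp (- (real n * (Dv + pos tt + 3 * d))) / 4"
    proof -
      have "(exp (- (real n * (Dv + d))) / 2) / Den = (exp (- (real n * (Dv + d))) / exp (real n * (pos tt + 2 * d))) / 4"
        unfolding Den_def by simp
      also have "exp (- (real n * (Dv + d))) / exp (real n * (pos tt + 2 * d)) = exp (- (real n * (Dv + d)) - real n * (pos tt + 2 * d))"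
        by (rule exp_diff[symmetric])
      also have "- (real n * (Dv + d)) - real n * (pos tt + 2 * d) = - (real n * (Dv + pos tt + 3 * d))"
        by (simp add: algebra_simps)
      finally show ?thesis .
    qed
    finally show ?thesis .
  qed
  then show ?thesis unfolding Dv_def Av_def Bv_def tt_def by blast
qed

end

lemma limsup_le_of_eps:
  fixes X :: "nat \<Rightarrow> ereal" and E :: real
  assumes "\<And>d. d > 0 \<Longrightarrow> limsup X \<le> ereal (E + d)"
  shows "limsup X \<le> ereal E"
proof (cases "limsup X")
  case (real r)
  have h: "r \<le> E + d" if "d > 0" for d
  proof -
    have "ereal r \<le> ereal (E + d)" using assms[OF that] real by simp
    then show ?thesis by simp
  qed
  show ?thesis using real field_le_epsilon[of r E, OF h] by simp
next
  case PInf then show ?thesis using assms[of 1] by simp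
next
  case MInf then show ?thesis by simp
qed


context jd begin

lemma limsup_Q:
  assumes R: "R \<ge> 0" and K: "K \<ge> 0"
  shows "limsup (\<lambda>n. ereal (- ln (1 - err_prob P W R K n) / real n))
     \<le> ereal (divKL P W Q + pos (R - A_TV P Q - pos (B_TV W Q - K)))"
proof (rule limsup_le_of_eps)
  fix e :: real assume e: "e > 0"
  define d where "d = e / 4"
  have d: "d > 0" using e unfolding d_def by simp
  define E where "E = divKL P W Q + pos (R - A_TV P Q - pos (B_TV W Q - K))"
  obtain N where N: "\<And>n. n \<ge> N \<Longrightarrow> succ_prob P W R K n \<ge> exp (- (real n * (E + 3 * d))) / 4"
    using succ_lb[OF d R K] unfolding E_def by blast
  obtain N2 :: nat where N2: "real N2 \<ge> 3 / d + 1" by (meson real_arch_simple)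
  have "\<forall>\<^sub>F n in sequentially. ereal (- ln (1 - err_prob P W R K n) / real n) \<le> ereal (E + e)"
  proof (rule eventually_sequentiallyI[of "max N N2"])
    fix n assume n: "n \<ge> max N N2"
    have n0: "real n \<ge> 3 / d + 1" using n N2 by linarith
    moreover have "3 / d \<ge> 0" using d by simp
    ultimately have npos: "real n > 0" by linarith
    have s: "1 - err_prob P W R K n = succ_prob P W R K n" unfolding err_prob_def by simp
    have sl: "succ_prob P W R K n \<ge> exp (- (real n * (E + 3 * d))) / 4" using N n by auto
    have ep: "exp (- (real n * (E + 3 * d))) / 4 > 0" by simp
    then have sp: "succ_prob P W R K n > 0" using sl by linarith
    have "ln (exp (- (real n * (E + 3 * d))) / 4) \<le> ln (succ_prob P W R K n)"
      using sl by (simp only: ln_le_cancel_iff[OF ep sp])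
    moreover have "ln (exp (- (real n * (E + 3 * d))) / 4) = - (real n * (E + 3 * d)) - ln 4"
      by (simp add: ln_div)
    moreover have "ln (4::real) \<le> 3" using ln_le_minus_one[of 4] by simp
    ultimately have "- ln (succ_prob P W R K n) \<le> real n * (E + 3 * d) + 3" by linarith
    then have "- ln (succ_prob P W R K n) / real n \<le> (real n * (E + 3 * d) + 3) / real n"
      using npos by (intro divide_right_mono) auto
    also have "\<dots> = E + 3 * d + 3 / real n" using npos by (simp add: field_simps)
    also have "3 / real n \<le> d"
    proof -
      have "3 / d \<le> real n" using n0 by simp
      then show ?thesis using d npos by (simp add: field_simps)
    qed
    finally have "- ln (succ_prob P W R K n) / real n \<le> E + e" unfolding d_def by simp
    then show "ereal (- ln (1 - err_prob P W R K n) / real n) \<le> ereal (E + e)" unfolding s by simp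
  qed
  then show "limsup (\<lambda>n. ereal (- ln (1 - err_prob P W R K n) / real n)) \<le> ereal (E + e)"
    by (rule Limsup_bounded)
qed

end

theorem lemma11:
  fixes P :: "'x::finite \<Rightarrow> real" and W :: "'x \<Rightarrow> 'y::finite \<Rightarrow> real" and R K :: real
  assumes "\<forall>x. P x \<ge> 0" and "(\<Sum>x\<in>UNIV. P x) = 1"
    and "\<forall>x y. W x y \<ge> 0" and "\<forall>x. (\<Sum>y\<in>UNIV. W x y) = 1"
    and "R > 0" and "K > 0"
  shows "limsup (\<lambda>n. ereal (- ln (1 - err_prob P W R K n) / real n)) \<le> ereal (Ec P W R K)"
proof -
  interpret chan P W using assms(1-4) by unfold_locales
  let ?L = "limsup (\<lambda>n. ereal (- ln (1 - err_prob P W R K n) / real n))"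
  let ?S = "(\<lambda>Q. divKL P W Q + pos (R - A_TV P Q - pos (B_TV W Q - K))) ` joint_dists P W"
  have bound: "?L \<le> ereal s" if "s \<in> ?S" for s
  proof -
    obtain Q where Q: "Q \<in> joint_dists P W" and s: "s = divKL P W Q + pos (R - A_TV P Q - pos (B_TV W Q - K))"
      using \<open>s \<in> ?S\<close> by blast
    interpret jd P W Q using Q by unfold_locales
    show ?thesis unfolding s using limsup_Q assms(5,6) by simp
  qed
  have PWj: "(\<lambda>y x. P x * W x y) \<in> joint_dists P W"
  proof -
    have "(\<Sum>y\<in>UNIV. \<Sum>x\<in>UNIV. P x * W x y) = (\<Sum>x\<in>UNIV. P x * (\<Sum>y\<in>UNIV. W x y))"
      by (subst sum.swap) (simp add: sum_distrib_left)
    also have "\<dots> = 1" using assms(2,4) by simp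
    finally show ?thesis unfolding joint_dists_def using assms(1,3) by auto
  qed
  then have ne: "?S \<noteq> {}" by blast
  show ?thesis
  proof (cases ?L)
    case (real r)
    have "r \<le> s" if "s \<in> ?S" for s using bound[OF that] real by simp
    then have "r \<le> Inf ?S" by (intro cInf_greatest ne) auto
    then show ?thesis unfolding Ec_def using real by simp
  next
    case PInf
    obtain s where "s \<in> ?S" using ne by blast
    then show ?thesis using bound PInf by fastforce
  next
    case MInf then show ?thesis by simp
  qed
qed

end
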